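(* Let $N\in\mathbb{N}$ and let $\{x[n]\}_{n\ge 0}$ and $\{z[n]\}_{n\ge 0}$ be mutually independent sequences of i.i.d. circular complex normal random variables $\mathcal{CN}(0,1)$. Let $\rho=|\rho|e^{\jmath\theta}$ with $|\rho|\in(0,1]$, $\theta\in[0,2\pi)$, set $\bar\rho=\sqrt{1-|\rho|^2}$, and define $y[n]=\rho\, x[n]+\bar\rho\, z[n]$. Let $$J=\arg\max_{0\le n\le N-1}|x[n]|^2,\qquad |\widehat{\rho}_{\mathrm{MMIE}}|^2=\frac{|y[J]|^2}{\mathbb{E}\big[|x[J]|^2\big]}.$$ Then $|\widehat{\rho}_{\mathrm{MMIE}}|^2$ is an asymptotically unbiased estimator of $|\rho|^2$, i.e. $\mathbb{E}\big[|\widehat{\rho}_{\mathrm{MMIE}}|^2\big]\to|\rho|^2$ as $N\to\infty$, and $$\operatorname{Var}\big(|\widehat{\rho}_{\mathrm{MMIE}}|^2\big)=O\!\left(\frac{1}{H(N)}\right),$$ where $H(N)=\sum_{n=1}^N \frac1n=\log N+\gamma+O(1/N)$ is the $N$-th harmonic number ($\gamma$ the Euler–Mascheroni constant). In particular, if $N=2^k$, then $\operatorname{Var}\big(|\widehat{\rho}_{\mathrm{MMIE}}|^2\big)=O(1/k)$ as $k\to\infty$.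
   Context: $\mathcal{CN}(0,1)$ denotes the circularly-symmetric complex Gaussian distribution with zero mean and unit variance ($\mathbb{E}|x|^2=1$). $\jmath$ is the imaginary unit. The argmax is almost surely unique. *)

theory Defs
  imports "HOL-Probability.Probability" "HOL-Library.Landau_Symbols"
begin

definition cn_density :: "complex \<Rightarrow> real" where
  "cn_density w = exp (- (cmod w)\<^sup>2) / pi"

definition argmax_idx :: "(nat \<Rightarrow> 'a \<Rightarrow> complex) \<Rightarrow> nat \<Rightarrow> 'a \<Rightarrow> nat" where
  "argmax_idx x N \<omega> = (ARG_MAX (\<lambda>n. (cmod (x n \<omega>))\<^sup>2) n. n < N)"

definition mmie_est :: "'a measure \<Rightarrow> (nat \<Rightarrow> 'a \<Rightarrow> complex) \<Rightarrow> (nat \<Rightarrow> 'a \<Rightarrow> complex)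
    \<Rightarrow> nat \<Rightarrow> 'a \<Rightarrow> real" where
  "mmie_est M x y N \<omega> =
     (cmod (y (argmax_idx x N \<omega>) \<omega>))\<^sup>2 /
     (\<integral>\<omega>'. (cmod (x (argmax_idx x N \<omega>') \<omega>'))\<^sup>2 \<partial>M)"

definition var :: "'a measure \<Rightarrow> ('a \<Rightarrow> real) \<Rightarrow> real" where
  "var M X = (\<integral>\<omega>. (X \<omega> - (\<integral>\<omega>'. X \<omega>' \<partial>M))\<^sup>2 \<partial>M)"

end

theory Submission
  imports Defs
begin

lemma distr_Re_Im: "distr lborel borel (\<lambda>w::complex. (Re w, Im w)) = (lborel :: (real \<times> real) measure)"
proof (rule lborel_eqI[symmetric])
  fix l u :: "real \<times> real"
  assume lu: "\<And>b. b \<in> Basis \<Longrightarrow> l \<bullet> b \<le> u \<bullet> b"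
  have l1: "fst l \<le> fst u" using lu[of "(1,0)"] by (cases l; cases u) (simp add: Basis_prod_def)
  have l2: "snd l \<le> snd u" using lu[of "(0,1)"] by (cases l; cases u) (simp add: Basis_prod_def)
  have pre: "(\<lambda>w::complex. (Re w, Im w)) -` box l u = box (Complex (fst l) (snd l)) (Complex (fst u) (snd u))"
    by (auto simp: box_def Basis_prod_def Basis_complex_def inner_complex_def inner_prod_def)
  have "emeasure (distr lborel borel (\<lambda>w::complex. (Re w, Im w))) (box l u)
      = emeasure lborel (box (Complex (fst l) (snd l)) (Complex (fst u) (snd u)))"
    by (subst emeasure_distr) (auto simp: pre)
  also have "\<dots> = ennreal ((fst u - fst l) * (snd u - snd l))"
    using l1 l2 by (simp add: emeasure_lborel_box_eq Basis_complex_def inner_complex_def)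
  also have "\<dots> = ennreal (prod ((\<bullet>) (u - l)) Basis)"
    by (simp add: Basis_prod_def prod.union_disjoint inner_prod_def prod.reindex inj_on_def mult.commute)
  finally show "emeasure (distr lborel borel (\<lambda>w::complex. (Re w, Im w))) (box l u) = ennreal (prod ((\<bullet>) (u - l)) Basis)" .
qed simp

lemma nn_integral_complex_pair:
  assumes [measurable]: "f \<in> borel_measurable (borel :: (real \<times> real) measure)"
  shows "(\<integral>\<^sup>+w. f (Re w, Im w) \<partial>(lborel::complex measure)) = (\<integral>\<^sup>+a. \<integral>\<^sup>+b. f (a, b) \<partial>lborel \<partial>lborel)"
proof -
  have "(\<integral>\<^sup>+w. f (Re w, Im w) \<partial>(lborel::complex measure)) = (\<integral>\<^sup>+p. f p \<partial>distr lborel borel (\<lambda>w::complex. (Re w, Im w)))"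
    by (subst nn_integral_distr) auto
  also have "\<dots> = (\<integral>\<^sup>+p. f p \<partial>(lborel \<Otimes>\<^sub>M lborel))"
    by (simp add: distr_Re_Im lborel_prod)
  also have "\<dots> = (\<integral>\<^sup>+a. \<integral>\<^sup>+b. f (a, b) \<partial>lborel \<partial>lborel)"
    by (rule lborel.nn_integral_fst[symmetric]) (simp add: lborel_prod)
  finally show ?thesis .
qed

lemma nn_integral_even:
  fixes f :: "real \<Rightarrow> ennreal"
  assumes [measurable]: "f \<in> borel_measurable borel" and ev: "\<And>x. f (-x) = f x"
  shows "(\<integral>\<^sup>+x. f x \<partial>lborel) = 2 * (\<integral>\<^sup>+x. f x * indicator {0<..} x \<partial>lborel)"
proof -
  have "(\<integral>\<^sup>+x. f x \<partial>lborel) = (\<integral>\<^sup>+x. f x * indicator {0<..} x + f x * indicator {..<0} x \<partial>lborel)"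
    by (intro nn_integral_cong_AE AE_I[where N="{0}"]) (auto split: split_indicator)
  also have "\<dots> = (\<integral>\<^sup>+x. f x * indicator {0<..} x \<partial>lborel) + (\<integral>\<^sup>+x. f x * indicator {..<0} x \<partial>lborel)"
    by (rule nn_integral_add) auto
  also have "(\<integral>\<^sup>+x. f x * indicator {..<0} x \<partial>lborel) = (\<integral>\<^sup>+x. f (0 + (-1) * x) * indicator {..<0} (0 + (-1) * x) \<partial>lborel)"
    by (subst nn_integral_real_affine[where c="-1" and t=0]) auto
  also have "\<dots> = (\<integral>\<^sup>+x. f x * indicator {0<..} x \<partial>lborel)"
    by (intro nn_integral_cong) (auto simp: ev split: split_indicator)
  finally show ?thesis by (simp add: mult_2)
qed

lemma inner_a_integral:
  fixes t s :: real
  assumes t: "0 \<le> t"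
  defines "c \<equiv> 1 + s\<^sup>2"
  shows "(\<integral>\<^sup>+a. ennreal (a * (if t < a\<^sup>2 * c then exp (- (a\<^sup>2 * c)) else 0)) * indicator {0<..} a \<partial>lborel)
      = ennreal (exp (- t) / (2 * c))"
proof -
  have c: "0 < c" unfolding c_def by (simp add: add_pos_nonneg)
  define r where "r = sqrt (t / c)"
  have r: "0 \<le> r" "r\<^sup>2 = t / c" using t c by (auto simp: r_def)
  have iff: "a > 0 \<and> t < a\<^sup>2 * c \<longleftrightarrow> r < a" for a
  proof
    assume "0 < a \<and> t < a\<^sup>2 * c"
    then have "r\<^sup>2 < a\<^sup>2" "0 < a" using r c by (auto simp: field_simps)
    then show "r < a" using r by (smt (verit) power_mono)
  next
    assume "r < a"
    moreover have "r\<^sup>2 < a\<^sup>2" using \<open>r < a\<close> r by (intro power_strict_mono) auto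
    ultimately have "r\<^sup>2 < a\<^sup>2" "0 < a" using r by auto
    then show "0 < a \<and> t < a\<^sup>2 * c" using r c by (auto simp: field_simps)
  qed
  have "(\<integral>\<^sup>+a. ennreal (a * (if t < a\<^sup>2 * c then exp (- (a\<^sup>2 * c)) else 0)) * indicator {0<..} a \<partial>lborel)
      = (\<integral>\<^sup>+a. ennreal (a * exp (- (a\<^sup>2 * c))) * indicator {r..} a \<partial>lborel)"
  proof (rule nn_integral_cong_AE)
    show "AE a in lborel. ennreal (a * (if t < a\<^sup>2 * c then exp (- (a\<^sup>2 * c)) else 0)) * indicator {0<..} a
      = ennreal (a * exp (- (a\<^sup>2 * c))) * indicator {r..} a"
      using AE_lborel_singleton[of r]
    proof eventually_elim
      fix a :: real assume "a \<noteq> r"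
      then show "ennreal (a * (if t < a\<^sup>2 * c then exp (- (a\<^sup>2 * c)) else 0)) * indicator {0<..} a
        = ennreal (a * exp (- (a\<^sup>2 * c))) * indicator {r..} a"
        using iff[of a] by (cases "r < a") (auto split: split_indicator)
    qed
  qed
  also have "\<dots> = ennreal (0 - (- exp (- (r\<^sup>2 * c)) / (2 * c)))"
  proof (rule nn_integral_FTC_atLeast)
    show "((\<lambda>a. - exp (- (a\<^sup>2 * c)) / (2 * c)) \<longlongrightarrow> 0) at_top"
    proof -
      have "((\<lambda>a::real. - exp (- (a\<^sup>2 * c)) / (2 * c)) \<longlongrightarrow> - 0 / (2 * c)) at_top"
        apply (intro tendsto_intros filterlim_compose[OF exp_at_bot] filterlim_compose[OF filterlim_uminus_at_bot_at_top])
        apply (subst mult.commute)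
        apply (rule filterlim_tendsto_pos_mult_at_top[OF tendsto_const c])
        apply (auto intro!: filterlim_pow_at_top filterlim_ident)
        using c apply simp
        done
      then show ?thesis by simp
    qed
    show "0 \<le> a * exp (- (a\<^sup>2 * c))" if "r \<le> a" for a using that r by auto
    show "((\<lambda>a. - exp (- (a\<^sup>2 * c)) / (2 * c)) has_real_derivative a * exp (- (a\<^sup>2 * c))) (at a)" for a
      using c by (auto intro!: derivative_eq_intros simp: field_simps power2_eq_square)
  qed auto
  also have "\<dots> = ennreal (exp (- t) / (2 * c))" using r c by simp
  finally show ?thesis .
qed

lemma outer_s_integral:
  "(\<integral>\<^sup>+s. ennreal (e / (2 * (1 + s\<^sup>2))) * indicator {0<..} s \<partial>lborel) = ennreal (e * pi / 4)"
  if e: "0 \<le> e" for e :: real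
proof -
  have "(\<integral>\<^sup>+s. ennreal (e / (2 * (1 + s\<^sup>2))) * indicator {0<..} s \<partial>lborel)
     = (\<integral>\<^sup>+s. ennreal (e / (2 * (1 + s\<^sup>2))) * indicator {0..} s \<partial>lborel)"
  proof (rule nn_integral_cong_AE)
    show "AE s in lborel. ennreal (e / (2 * (1 + s\<^sup>2))) * indicator {0<..} s = ennreal (e / (2 * (1 + s\<^sup>2))) * indicator {0..} s"
      using AE_lborel_singleton[of 0] by eventually_elim (auto split: split_indicator)
  qed
  also have "\<dots> = ennreal (e * (pi / 2) / 2 - e * arctan 0 / 2)"
  proof (rule nn_integral_FTC_atLeast)
    show "((\<lambda>s. e * arctan s / 2) \<longlongrightarrow> e * (pi / 2) / 2) at_top"
      by (intro tendsto_intros tendsto_arctan_at_top) auto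
    show "((\<lambda>s. e * arctan s / 2) has_real_derivative e / (2 * (1 + x\<^sup>2))) (at x)" for x
      by (auto intro!: derivative_eq_intros simp: divide_simps power2_eq_square add_nonneg_eq_0_iff)
  qed (use e in auto)
  also have "\<dots> = ennreal (e * pi / 4)" by simp
  finally show ?thesis .
qed

lemma gauss2_tail:
  fixes t :: real assumes t: "0 \<le> t"
  shows "(\<integral>\<^sup>+a. \<integral>\<^sup>+b. ennreal (if t < a\<^sup>2 + b\<^sup>2 then exp (- (a\<^sup>2 + b\<^sup>2)) else 0) \<partial>lborel \<partial>lborel)
      = ennreal (pi * exp (- t))"
proof -
  define q where "q a b = (if t < a\<^sup>2 + b\<^sup>2 then exp (- (a\<^sup>2 + b\<^sup>2)) else 0)" for a b :: real
  have q_nn: "0 \<le> q a b" for a b by (simp add: q_def)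
  define K where "K a = (\<integral>\<^sup>+b. ennreal (q a b) * indicator {0<..} b \<partial>lborel)" for a
  have K_meas[measurable]: "K \<in> borel_measurable borel"
    unfolding K_def q_def by measurable
  have 1: "(\<integral>\<^sup>+b. ennreal (q a b) \<partial>lborel) = 2 * K a" for a
    unfolding K_def by (rule nn_integral_even) (auto simp: q_def)
  have "(\<integral>\<^sup>+a. \<integral>\<^sup>+b. ennreal (q a b) \<partial>lborel \<partial>lborel) = (\<integral>\<^sup>+a. 2 * K a \<partial>lborel)"
    by (simp add: 1)
  also have "\<dots> = 2 * (\<integral>\<^sup>+a. K a \<partial>lborel)"
    by (rule nn_integral_cmult) simp
  also have "(\<integral>\<^sup>+a. K a \<partial>lborel) = 2 * (\<integral>\<^sup>+a. K a * indicator {0<..} a \<partial>lborel)"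
    by (rule nn_integral_even) (auto simp: K_def q_def power2_minus cong: if_cong)
  also have "(\<integral>\<^sup>+a. K a * indicator {0<..} a \<partial>lborel)
      = (\<integral>\<^sup>+a. \<integral>\<^sup>+s. ennreal (a * q a (a * s)) * indicator {0<..} s * indicator {0<..} a \<partial>lborel \<partial>lborel)"
  proof (rule nn_integral_cong)
    fix a :: real
    show "K a * indicator {0<..} a = (\<integral>\<^sup>+s. ennreal (a * q a (a * s)) * indicator {0<..} s * indicator {0<..} a \<partial>lborel)"
    proof (cases "0 < a")
      case True
      have "K a = ennreal \<bar>a\<bar> * (\<integral>\<^sup>+s. ennreal (q a (0 + a * s)) * indicator {0<..} (0 + a * s) \<partial>lborel)"
        unfolding K_def using True by (intro nn_integral_real_affine) (auto simp: q_def)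
      also have "\<dots> = ennreal a * (\<integral>\<^sup>+s. ennreal (q a (a * s)) * indicator {0<..} s \<partial>lborel)"
        using True by (auto intro!: nn_integral_cong arg_cong2[where f="(*)"] split: split_indicator simp: zero_less_mult_iff)
      also have "\<dots> = (\<integral>\<^sup>+s. ennreal a * (ennreal (q a (a * s)) * indicator {0<..} s) \<partial>lborel)"
        by (rule nn_integral_cmult[symmetric]) (simp add: q_def)
      also have "\<dots> = (\<integral>\<^sup>+s. ennreal (a * q a (a * s)) * indicator {0<..} s \<partial>lborel)"
        using True q_nn by (intro nn_integral_cong) (simp add: ennreal_mult mult.assoc)
      finally show ?thesis using True by simp
    qed simp
  qed
  also have "\<dots> = (\<integral>\<^sup>+s. \<integral>\<^sup>+a. ennreal (a * q a (a * s)) * indicator {0<..} s * indicator {0<..} a \<partial>lborel \<partial>lborel)"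
    by (rule lborel_pair.Fubini') (unfold q_def, measurable)
  also have "\<dots> = (\<integral>\<^sup>+s. ennreal (exp (- t) / (2 * (1 + s\<^sup>2))) * indicator {0<..} s \<partial>lborel)"
  proof (rule nn_integral_cong)
    fix s :: real
    have eq: "a\<^sup>2 + (a * s)\<^sup>2 = a\<^sup>2 * (1 + s\<^sup>2)" for a :: real by (simp add: algebra_simps power2_eq_square)
    have "(\<integral>\<^sup>+a. ennreal (a * q a (a * s)) * indicator {0<..} s * indicator {0<..} a \<partial>lborel)
      = (\<integral>\<^sup>+a. ennreal (a * (if t < a\<^sup>2 * (1 + s\<^sup>2) then exp (- (a\<^sup>2 * (1 + s\<^sup>2))) else 0)) * indicator {0<..} a \<partial>lborel) * indicator {0<..} s"
      by (subst nn_integral_multc[symmetric]) (auto simp: q_def eq intro!: nn_integral_cong split: split_indicator)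
    also have "\<dots> = ennreal (exp (- t) / (2 * (1 + s\<^sup>2))) * indicator {0<..} s"
      using inner_a_integral[OF t, of s] by simp
    finally show "(\<integral>\<^sup>+a. ennreal (a * q a (a * s)) * indicator {0<..} s * indicator {0<..} a \<partial>lborel)
      = ennreal (exp (- t) / (2 * (1 + s\<^sup>2))) * indicator {0<..} s" .
  qed
  also have "\<dots> = ennreal (exp (- t) * pi / 4)"
    by (rule outer_s_integral) simp
  finally have "(\<integral>\<^sup>+a. \<integral>\<^sup>+b. ennreal (q a b) \<partial>lborel \<partial>lborel) = 2 * (2 * ennreal (exp (- t) * pi / 4))" .
  also have "\<dots> = ennreal (pi * exp (- t))"
  proof -
    have "ennreal (pi * exp (- t)) = ennreal (4 * (exp (- t) * pi / 4))" by simp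
    also have "\<dots> = ennreal 4 * ennreal (exp (- t) * pi / 4)" by (rule ennreal_mult) auto
    also have "\<dots> = 2 * (2 * ennreal (exp (- t) * pi / 4))" by (simp add: mult.assoc[symmetric])
    finally show ?thesis by simp
  qed
  finally show ?thesis unfolding q_def .
qed

lemma cn_tail:
  fixes t :: real assumes t: "0 \<le> t"
  shows "emeasure (density lborel (\<lambda>w. ennreal (cn_density w))) {w. t < (cmod w)\<^sup>2} = ennreal (exp (- t))"
proof -
  define q where "q p = (if t < (fst p)\<^sup>2 + (snd p)\<^sup>2 then exp (- ((fst p)\<^sup>2 + (snd p)\<^sup>2)) else 0)" for p :: "real \<times> real"
  have cm: "(cmod w)\<^sup>2 = (Re w)\<^sup>2 + (Im w)\<^sup>2" for w by (simp add: cmod_def)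
  have "emeasure (density lborel (\<lambda>w. ennreal (cn_density w))) {w. t < (cmod w)\<^sup>2}
      = (\<integral>\<^sup>+w. ennreal (cn_density w) * indicator {w. t < (cmod w)\<^sup>2} w \<partial>lborel)"
    by (subst emeasure_density) (auto simp: cn_density_def)
  also have "\<dots> = (\<integral>\<^sup>+w. ennreal (1 / pi) * ennreal (q (Re w, Im w)) \<partial>lborel)"
    by (intro nn_integral_cong) (auto simp: cn_density_def q_def cm ennreal_mult[symmetric] split: split_indicator)
  also have "\<dots> = ennreal (1 / pi) * (\<integral>\<^sup>+w. ennreal (q (Re w, Im w)) \<partial>lborel)"
    by (rule nn_integral_cmult) (simp add: q_def)
  also have "(\<integral>\<^sup>+w. ennreal (q (Re w, Im w)) \<partial>lborel) = (\<integral>\<^sup>+a. \<integral>\<^sup>+b. ennreal (q (a, b)) \<partial>lborel \<partial>lborel)"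
    by (rule nn_integral_complex_pair) (unfold q_def, subst borel_prod[symmetric], measurable)
  also have "\<dots> = ennreal (pi * exp (- t))"
    using gauss2_tail[OF t] by (simp add: q_def cong: if_cong)
  also have "ennreal (1 / pi) * ennreal (pi * exp (- t)) = ennreal (exp (- t))"
    by (simp add: ennreal_mult[symmetric])
  finally show ?thesis .
qed

lemma (in prob_space) cn_sq_exponential:
  assumes D: "distributed M lborel X (\<lambda>w. ennreal (cn_density w))"
  shows "distributed M lborel (\<lambda>\<omega>. (cmod (X \<omega>))\<^sup>2) (exponential_density 1)"
proof -
  have Xm[measurable]: "X \<in> borel_measurable M" using distributed_measurable[OF D] by simp
  have "\<P>(\<omega> in M. (cmod (X \<omega>))\<^sup>2 \<le> a) = 1 - exp (- a * 1)" if a: "0 \<le> a" for a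
  proof -
    have "emeasure M {\<omega>\<in>space M. a < (cmod (X \<omega>))\<^sup>2} = emeasure (distr M lborel X) {w. a < (cmod w)\<^sup>2}"
      by (subst emeasure_distr) (auto intro!: arg_cong[where f="emeasure M"])
    also have "\<dots> = ennreal (exp (- a))"
      unfolding distributed_distr_eq_density[OF D] by (rule cn_tail[OF a])
    finally have "\<P>(\<omega> in M. a < (cmod (X \<omega>))\<^sup>2) = exp (- a)"
      by (simp add: emeasure_eq_measure)
    moreover have "\<P>(\<omega> in M. (cmod (X \<omega>))\<^sup>2 \<le> a) = 1 - \<P>(\<omega> in M. a < (cmod (X \<omega>))\<^sup>2)"
      by (subst prob_compl[symmetric]) (auto intro!: arg_cong[where f=prob])
    ultimately show ?thesis by simp
  qed
  then show ?thesis
    by (subst exponential_distributed_iff) auto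
qed

lemma (in prob_space) cn_sq_moments:
  assumes D: "distributed M lborel X (\<lambda>w. ennreal (cn_density w))"
  shows "integrable M (\<lambda>\<omega>. (cmod (X \<omega>))\<^sup>2)" "expectation (\<lambda>\<omega>. (cmod (X \<omega>))\<^sup>2) = 1"
    "integrable M (\<lambda>\<omega>. ((cmod (X \<omega>))\<^sup>2)\<^sup>2)" "expectation (\<lambda>\<omega>. ((cmod (X \<omega>))\<^sup>2)\<^sup>2) = 2"
  using erlang_ith_moment_integrable[OF _ cn_sq_exponential[OF D], of 1]
    erlang_ith_moment[OF _ cn_sq_exponential[OF D], of 1]
    erlang_ith_moment_integrable[OF _ cn_sq_exponential[OF D], of 2]
    erlang_ith_moment[OF _ cn_sq_exponential[OF D], of 2]
  by (simp_all add: numeral_2_eq_2)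

lemma argmax_eq_Eps:
  fixes f :: "nat \<Rightarrow> real"
  shows "(ARG_MAX (\<lambda>m. f m) m. m < N) = Eps (\<lambda>n. n \<in> {n. n < N \<and> (\<forall>m<N. f m \<le> f n)})"
  unfolding arg_max_def is_arg_max_def
  by (rule arg_cong[where f=Eps]) (auto simp: fun_eq_iff is_arg_max_linorder)

lemma argmax_cong:
  fixes g g' :: "nat \<Rightarrow> real"
  assumes "\<And>m. m < N \<Longrightarrow> g m = g' m"
  shows "(ARG_MAX g m. m < N) = (ARG_MAX g' m. m < N)"
  unfolding arg_max_def is_arg_max_def
  by (rule arg_cong[where f=Eps]) (auto simp: fun_eq_iff assms)

lemma argmax_props:
  fixes f :: "nat \<Rightarrow> real"
  assumes "0 < N"
  shows "(ARG_MAX f m. m < N) < N" "\<And>m. m < N \<Longrightarrow> f m \<le> f (ARG_MAX f m. m < N)"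
proof -
  have "Max (f ` {..<N}) \<in> f ` {..<N}" using assms by (intro Max_in) auto
  then obtain n where n: "n < N" "f n = Max (f ` {..<N})" by auto
  have "is_arg_max f (\<lambda>n. n < N) n"
    using n by (auto simp: is_arg_max_linorder)
  then have "\<exists>n. is_arg_max f (\<lambda>n. n < N) n" by blast
  then have "is_arg_max f (\<lambda>n. n < N) (ARG_MAX f m. m < N)"
    unfolding arg_max_def by (auto intro: someI_ex)
  then have A: "(ARG_MAX f m. m < N) < N" "\<forall>m. m < N \<longrightarrow> f m \<le> f (ARG_MAX f m. m < N)"
    by (simp_all add: is_arg_max_linorder)
  then show "(ARG_MAX f m. m < N) < N" "\<And>m. m < N \<Longrightarrow> f m \<le> f (ARG_MAX f m. m < N)"
    by blast+
qed

lemma measurable_argmax: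
  fixes f :: "nat \<Rightarrow> 'b \<Rightarrow> real"
  assumes [measurable]: "\<And>m. f m \<in> borel_measurable M'"
  shows "(\<lambda>\<omega>. ARG_MAX (\<lambda>m. f m \<omega>) m. m < N) \<in> measurable M' (count_space UNIV)"
proof (subst measurable_count_space_eq2_countable, safe)
  fix k :: nat
  define S where "S \<omega> = {n. n < N \<and> (\<forall>m<N. f m \<omega> \<le> f n \<omega>)}" for \<omega>
  have eq: "(\<lambda>\<omega>. ARG_MAX (\<lambda>m. f m \<omega>) m. m < N) -` {k} \<inter> space M'
    = (\<Union>A\<in>Pow {..<N}. {\<omega>\<in>space M'. (\<forall>n\<in>{..<N}. (n \<in> A \<longleftrightarrow> (\<forall>m\<in>{..<N}. f m \<omega> \<le> f n \<omega>))) \<and> Eps (\<lambda>n. n \<in> A) = k})"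
  proof (intro set_eqI iffI)
    fix \<omega> assume "\<omega> \<in> (\<lambda>\<omega>. ARG_MAX (\<lambda>m. f m \<omega>) m. m < N) -` {k} \<inter> space M'"
    then have "Eps (\<lambda>n. n \<in> S \<omega>) = k" "\<omega> \<in> space M'" by (auto simp: argmax_eq_Eps S_def)
    moreover have "S \<omega> \<in> Pow {..<N}" by (auto simp: S_def)
    ultimately show "\<omega> \<in> (\<Union>A\<in>Pow {..<N}. {\<omega>\<in>space M'. (\<forall>n\<in>{..<N}. (n \<in> A \<longleftrightarrow> (\<forall>m\<in>{..<N}. f m \<omega> \<le> f n \<omega>))) \<and> Eps (\<lambda>n. n \<in> A) = k})"
      by (intro UN_I[of "S \<omega>"]) (auto simp: S_def)
  next
    fix \<omega> assume "\<omega> \<in> (\<Union>A\<in>Pow {..<N}. {\<omega>\<in>space M'. (\<forall>n\<in>{..<N}. (n \<in> A \<longleftrightarrow> (\<forall>m\<in>{..<N}. f m \<omega> \<le> f n \<omega>))) \<and> Eps (\<lambda>n. n \<in> A) = k})"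
    then obtain A where A: "A \<subseteq> {..<N}" "\<omega> \<in> space M'" "\<forall>n\<in>{..<N}. (n \<in> A \<longleftrightarrow> (\<forall>m\<in>{..<N}. f m \<omega> \<le> f n \<omega>))" "Eps (\<lambda>n. n \<in> A) = k"
      by (auto simp del: lessThan_iff)
    have "A = S \<omega>" using A(1,3) unfolding S_def by auto
    then show "\<omega> \<in> (\<lambda>\<omega>. ARG_MAX (\<lambda>m. f m \<omega>) m. m < N) -` {k} \<inter> space M'"
      using A by (auto simp: argmax_eq_Eps S_def)
  qed
  show "(\<lambda>\<omega>. ARG_MAX (\<lambda>m. f m \<omega>) m. m < N) -` {k} \<inter> space M' \<in> sets M'"
    unfolding eq
  proof (intro sets.finite_UN)
    fix A assume A: "A \<in> Pow {..<N}"
    then have fin: "finite A" "finite ({..<N} - A)" by (auto intro: finite_subset)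
    have "{\<omega>\<in>space M'. (\<forall>n\<in>{..<N}. (n \<in> A \<longleftrightarrow> (\<forall>m\<in>{..<N}. f m \<omega> \<le> f n \<omega>))) \<and> Eps (\<lambda>n. n \<in> A) = k}
      = {\<omega>\<in>space M'. (\<forall>n\<in>A. \<forall>m\<in>{..<N}. f m \<omega> \<le> f n \<omega>) \<and> (\<forall>n\<in>{..<N} - A. \<exists>m\<in>{..<N}. f n \<omega> < f m \<omega>) \<and> Eps (\<lambda>n. n \<in> A) = k}"
      using A by (auto simp: not_le) (meson DiffI lessThan_iff not_le)
    also have "\<dots> \<in> sets M'"
      using fin by (cases "Eps (\<lambda>n. n \<in> A) = k") measurable
    finally show "{\<omega>\<in>space M'. (\<forall>n\<in>{..<N}. (n \<in> A \<longleftrightarrow> (\<forall>m\<in>{..<N}. f m \<omega> \<le> f n \<omega>))) \<and> Eps (\<lambda>n. n \<in> A) = k} \<in> sets M'" .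
  qed auto
qed auto

lemma G_sum: "1 - (1 - exp (- t))^n = (\<Sum>k<n. exp (- t) * (1 - exp (- t))^k)" for t :: real
  by (subst one_diff_power_eq) (simp add: sum_distrib_left)

lemma tendsto_1mexp: "((\<lambda>t::real. 1 - exp (- t)) \<longlongrightarrow> 1) at_top"
proof -
  have "((\<lambda>t::real. 1 - exp (- t)) \<longlongrightarrow> 1 - 0) at_top"
    by (intro tendsto_intros filterlim_compose[OF exp_at_bot] filterlim_uminus_at_bot_at_top)
  then show ?thesis by simp
qed

lemma int_gk:
  "(\<integral>\<^sup>+t. ennreal (exp (- t) * (1 - exp (- t))^k) * indicator {0..} t \<partial>lborel) = ennreal (1 / (Suc k))"
proof -
  have "(\<integral>\<^sup>+t. ennreal (exp (- t) * (1 - exp (- t))^k) * indicator {0..} t \<partial>lborel)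
     = ennreal (1 / (Suc k) - (1 - exp (- 0))^Suc k / Suc k)"
  proof (rule nn_integral_FTC_atLeast)
    show "((\<lambda>t. (1 - exp (- t))^Suc k / Suc k) \<longlongrightarrow> 1 / Suc k) at_top"
      using tendsto_divide[OF tendsto_power[OF tendsto_1mexp, of "Suc k"] tendsto_const[of "real (Suc k)"]]
      by simp
    show "((\<lambda>t. (1 - exp (- t))^Suc k / Suc k) has_real_derivative exp (- x) * (1 - exp (- x))^k) (at x)" for x :: real
    proof -
      have d: "((\<lambda>t. (1 - exp (- t))^Suc k) has_real_derivative (1 + real k) * (exp (- x) * (1 - exp (- x))^k)) (at x)"
        by (rule DERIV_power_Suc) (auto intro!: derivative_eq_intros)
      show ?thesis
        by (rule DERIV_cong[OF DERIV_cdivide[OF d, of "real (Suc k)"]]) (simp add: field_simps)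
    qed
    show "0 \<le> exp (- x) * (1 - exp (- x))^k" if "0 \<le> x" for x :: real
      using that by (intro mult_nonneg_nonneg zero_le_power) auto
  qed simp
  then show ?thesis by simp
qed

lemma int_G:
  "(\<integral>\<^sup>+t. ennreal (1 - (1 - exp (- t))^N) * indicator {0..} t \<partial>lborel) = ennreal (harm N)"
proof -
  have nn: "0 \<le> exp (- t) * (1 - exp (- t))^k" if "0 \<le> t" for t :: real and k
    using that by (intro mult_nonneg_nonneg zero_le_power) auto
  have "(\<integral>\<^sup>+t. ennreal (1 - (1 - exp (- t))^N) * indicator {0..} t \<partial>lborel)
    = (\<integral>\<^sup>+t. (\<Sum>k<N. ennreal (exp (- t) * (1 - exp (- t))^k) * indicator {0..} t) \<partial>lborel)"
    by (intro nn_integral_cong) (auto simp: G_sum sum_distrib_right nn sum_ennreal lessThan_def split: split_indicator)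
  also have "\<dots> = (\<Sum>k<N. (\<integral>\<^sup>+t. ennreal (exp (- t) * (1 - exp (- t))^k) * indicator {0..} t \<partial>lborel))"
    by (rule nn_integral_sum) auto
  also have "\<dots> = (\<Sum>k<N. ennreal (1 / Suc k))" by (simp add: int_gk)
  also have "\<dots> = ennreal (harm N)"
    by (simp add: harm_altdef sum_ennreal divide_inverse del: of_nat_Suc)
  finally show ?thesis .
qed

lemma deriv_q_pow:
  "((\<lambda>t. (1 - exp (- t))^Suc k) has_real_derivative real (Suc k) * (exp (- x) * (1 - exp (- x))^k)) (at x)"
proof -
  have d: "((\<lambda>t. (1 - exp (- t))^Suc k) has_real_derivative (1 + real k) * (exp (- x) * (1 - exp (- x))^k)) (at x)"
    by (rule DERIV_power_Suc) (auto intro!: derivative_eq_intros)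
  then show ?thesis by simp
qed

lemma tendsto_t_G: "((\<lambda>t::real. t * (1 - (1 - exp (- t))^n)) \<longlongrightarrow> 0) at_top"
proof -
  have b: "0 \<le> t * (1 - (1 - exp (- t))^n) \<and> t * (1 - (1 - exp (- t))^n) \<le> real n * (t ^ 1 / exp t)"
    if t: "0 \<le> t" for t :: real
  proof
    have "(1 - exp (- t))^n \<le> 1" using t by (intro power_le_one) auto
    then show "0 \<le> t * (1 - (1 - exp (- t))^n)" using t by simp
    have "1 - (1 - exp (- t))^n = (\<Sum>k<n. exp (- t) * (1 - exp (- t))^k)" by (rule G_sum)
    also have "\<dots> \<le> (\<Sum>k<n. exp (- t))"
      using t by (intro sum_mono) (auto intro!: mult_left_le power_le_one)
    also have "\<dots> = real n * exp (- t)" by simp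
    finally have le: "1 - (1 - exp (- t))^n \<le> real n * exp (- t)" .
    have "t * (1 - (1 - exp (- t))^n) \<le> t * (real n * exp (- t))"
      using le t by (rule mult_left_mono)
    then show "t * (1 - (1 - exp (- t))^n) \<le> real n * (t ^ 1 / exp t)"
      by (simp add: exp_minus field_simps)
  qed
  have e1: "\<forall>\<^sub>F t in at_top. (0::real) \<le> t * (1 - (1 - exp (- t))^n)"
    using eventually_ge_at_top[of "0::real"] by eventually_elim (use b in blast)
  have e2: "\<forall>\<^sub>F t in at_top. t * (1 - (1 - exp (- t))^n) \<le> real n * (t ^ 1 / exp t)"
    using eventually_ge_at_top[of "0::real"] by eventually_elim (use b in blast)
  have l: "((\<lambda>t::real. real n * (t ^ 1 / exp t)) \<longlongrightarrow> 0) at_top"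
    using tendsto_mult[OF tendsto_const[of "real n"] tendsto_power_div_exp_0[of 1]] by simp
  show ?thesis by (rule tendsto_sandwich[OF e1 e2 tendsto_const l])
qed

lemma int_tgk:
  "(\<integral>\<^sup>+t. ennreal (2 * t * (exp (- t) * (1 - exp (- t))^k)) * indicator {0..} t \<partial>lborel)
    = ennreal (2 * harm (Suc k) / Suc k)"
proof -
  define n where "n = Suc k"
  define A where "A t = (\<Sum>j<n. (1 - exp (- t))^Suc j / Suc j)" for t :: real
  define F where "F t = 2 / n * (A t - t * (1 - (1 - exp (- t))^n))" for t :: real
  have dA: "(A has_real_derivative 1 - (1 - exp (- x))^n) (at x)" for x
  proof -
    have "(A has_real_derivative (\<Sum>j<n. exp (- x) * (1 - exp (- x))^j)) (at x)"
      unfolding A_def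
    proof (rule DERIV_sum)
      fix j assume "j \<in> {..<n}"
      show "((\<lambda>t. (1 - exp (- t))^Suc j / Suc j) has_real_derivative exp (- x) * (1 - exp (- x))^j) (at x)"
        by (rule DERIV_cong[OF DERIV_cdivide[OF deriv_q_pow[of j x], of "real (Suc j)"]]) simp
    qed
    then show ?thesis by (simp add: G_sum)
  qed
  have dF: "(F has_real_derivative 2 * x * (exp (- x) * (1 - exp (- x))^k)) (at x)" for x
  proof -
    have "(F has_real_derivative 2 / n * ((1 - (1 - exp (- x))^n) - (1 * (1 - (1 - exp (- x))^n) + x * (0 - real n * (exp (- x) * (1 - exp (- x))^k))))) (at x)"
    proof -
      have dG: "((\<lambda>t. 1 - (1 - exp (- t))^n) has_real_derivative 0 - real n * (exp (- x) * (1 - exp (- x))^k)) (at x)"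
        unfolding n_def by (intro DERIV_diff DERIV_const deriv_q_pow)
      have dP: "((\<lambda>t. t * (1 - (1 - exp (- t))^n)) has_real_derivative 1 * (1 - (1 - exp (- x))^n) + x * (0 - real n * (exp (- x) * (1 - exp (- x))^k))) (at x)"
        by (rule DERIV_cong[OF DERIV_mult[OF DERIV_ident dG]]) (simp add: algebra_simps)
      show ?thesis unfolding F_def
        by (intro DERIV_cmult DERIV_diff dA dP)
    qed
    then show ?thesis by (rule DERIV_cong) (simp add: n_def field_simps)
  qed
  have "(\<integral>\<^sup>+t. ennreal (2 * t * (exp (- t) * (1 - exp (- t))^k)) * indicator {0..} t \<partial>lborel)
    = ennreal (2 / n * harm n - F 0)"
  proof (rule nn_integral_FTC_atLeast)
    have "(A \<longlongrightarrow> (\<Sum>j<n. 1^Suc j / Suc j)) at_top"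
      unfolding A_def by (intro tendsto_intros tendsto_1mexp) auto
    then have Al: "(A \<longlongrightarrow> harm n) at_top"
      by (simp add: harm_altdef divide_inverse del: of_nat_Suc)
    have "((\<lambda>t. 2 / n * (A t - t * (1 - (1 - exp (- t))^n))) \<longlongrightarrow> 2 / n * (harm n - 0)) at_top"
      by (rule tendsto_mult[OF tendsto_const tendsto_diff[OF Al tendsto_t_G]])
    then show "(F \<longlongrightarrow> 2 / n * harm n) at_top"
      by (simp add: F_def[abs_def])
    show "0 \<le> 2 * x * (exp (- x) * (1 - exp (- x))^k)" if "0 \<le> x" for x :: real
      using that by (intro mult_nonneg_nonneg zero_le_power) auto
  qed (auto intro: dF)
  also have "F 0 = 0" by (simp add: F_def A_def)
  finally show ?thesis by (simp add: n_def)
qed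

lemma harm_sq_bound: "(\<Sum>k<N. 2 * harm (Suc k) / real (Suc k)) \<le> (harm N)\<^sup>2 + (harm N :: real)"
proof (induction N)
  case (Suc N)
  have h: "harm (Suc N) = harm N + 1 / real (Suc N)" by (simp add: harm_Suc divide_inverse)
  have hn: "0 \<le> (harm N :: real)" by (rule harm_nonneg)
  have "(\<Sum>k<Suc N. 2 * harm (Suc k) / real (Suc k)) = (\<Sum>k<N. 2 * harm (Suc k) / real (Suc k)) + 2 * harm (Suc N) / real (Suc N)"
    by simp
  also have "\<dots> \<le> (harm N)\<^sup>2 + harm N + 2 * harm (Suc N) / real (Suc N)"
    using Suc by simp
  also have "\<dots> \<le> (harm (Suc N))\<^sup>2 + harm (Suc N)"
  proof -
    define u where "u = 1 / real (Suc N)"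
    have u: "0 < u" "u \<le> 1" by (auto simp: u_def)
    have "(harm N)\<^sup>2 + harm N + 2 * (harm N + u) * u \<le> (harm N + u)\<^sup>2 + (harm N + u)"
      using u by (simp add: power2_eq_square algebra_simps)
    then show ?thesis unfolding h u_def[symmetric] by (simp add: u_def divide_inverse)
  qed
  finally show ?case .
qed (simp add: harm_expand)

lemma (in prob_space) layer_cake:
  fixes X :: "'a \<Rightarrow> real" and h :: "real \<Rightarrow> real"
  assumes X[measurable]: "X \<in> borel_measurable M" and h[measurable]: "h \<in> borel_measurable borel"
  shows "(\<integral>\<^sup>+\<omega>. (\<integral>\<^sup>+t. ennreal (h t) * indicator {0..<X \<omega>} t \<partial>lborel) \<partial>M)
       = (\<integral>\<^sup>+t. ennreal (h t) * indicator {0..} t * emeasure M {\<omega>\<in>space M. t < X \<omega>} \<partial>lborel)"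
proof -
  have p1[measurable]: "Measurable.pred (M \<Otimes>\<^sub>M lborel) (\<lambda>p. snd p < X (fst p))"
    by measurable
  have p0: "Measurable.pred (M \<Otimes>\<^sub>M lborel) (\<lambda>p. snd p < (0::real))"
    by measurable
  have p2[measurable]: "Measurable.pred (M \<Otimes>\<^sub>M lborel) (\<lambda>p. (0::real) \<le> snd p)"
    using pred_intros_logic(2)[OF p0] by (simp add: not_less)
  have m: "(\<lambda>p. ennreal (h (snd p)) * (if 0 \<le> snd p \<and> snd p < X (fst p) then 1 else 0)) \<in> borel_measurable (M \<Otimes>\<^sub>M lborel)"
    by measurable
  interpret P: pair_sigma_finite M lborel ..
  have [measurable]: "(\<lambda>p. h (snd p)) \<in> borel_measurable (M \<Otimes>\<^sub>M lborel)"
    by (rule measurable_compose[OF _ h]) simp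
  have "(\<integral>\<^sup>+\<omega>. (\<integral>\<^sup>+t. ennreal (h t) * indicator {0..<X \<omega>} t \<partial>lborel) \<partial>M)
     = (\<integral>\<^sup>+\<omega>. (\<integral>\<^sup>+t. ennreal (h t) * (if 0 \<le> t \<and> t < X \<omega> then 1 else 0) \<partial>lborel) \<partial>M)"
    by (intro nn_integral_cong) (auto split: split_indicator)
  also have "\<dots> = (\<integral>\<^sup>+t. (\<integral>\<^sup>+\<omega>. ennreal (h t) * (if 0 \<le> t \<and> t < X \<omega> then 1 else 0) \<partial>M) \<partial>lborel)"
  proof -
    show ?thesis by (rule P.Fubini'[symmetric]) (use m in \<open>simp add: split_beta'\<close>)
  qed
  also have "\<dots> = (\<integral>\<^sup>+t. ennreal (h t) * indicator {0..} t * emeasure M {\<omega>\<in>space M. t < X \<omega>} \<partial>lborel)"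
  proof (rule nn_integral_cong)
    fix t :: real
    have "(\<integral>\<^sup>+\<omega>. ennreal (h t) * (if 0 \<le> t \<and> t < X \<omega> then 1 else 0) \<partial>M)
      = (\<integral>\<^sup>+\<omega>. (ennreal (h t) * indicator {0..} t) * indicator {\<omega>\<in>space M. t < X \<omega>} \<omega> \<partial>M)"
      by (intro nn_integral_cong) (auto split: split_indicator)
    also have "\<dots> = ennreal (h t) * indicator {0..} t * emeasure M {\<omega>\<in>space M. t < X \<omega>}"
      by (rule nn_integral_cmult_indicator) measurable
    finally show "(\<integral>\<^sup>+\<omega>. ennreal (h t) * (if 0 \<le> t \<and> t < X \<omega> then 1 else 0) \<partial>M)
      = ennreal (h t) * indicator {0..} t * emeasure M {\<omega>\<in>space M. t < X \<omega>}" .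
  qed
  finally show ?thesis .
qed

lemma lc_one: "0 \<le> x \<Longrightarrow> (\<integral>\<^sup>+t. ennreal 1 * indicator {0..<x} t \<partial>lborel) = ennreal (x::real)"
  by simp

lemma lc_two: assumes x: "0 \<le> x" shows "(\<integral>\<^sup>+t. ennreal (2 * t) * indicator {0..<x} t \<partial>lborel) = ennreal (x\<^sup>2)"
proof -
  have "(\<integral>\<^sup>+t. ennreal (2 * t) * indicator {0..<x} t \<partial>lborel) = (\<integral>\<^sup>+t. ennreal (2 * t) * indicator {0..x} t \<partial>lborel)"
  proof (rule nn_integral_cong_AE)
    show "AE t in lborel. ennreal (2 * t) * indicator {0..<x} t = ennreal (2 * t) * indicator {0..x} t"
      using AE_lborel_singleton[of x] by eventually_elim (auto split: split_indicator)
  qed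
  also have "\<dots> = x\<^sup>2 - 0\<^sup>2"
    by (rule nn_integral_FTC_Icc) (use x in \<open>auto intro!: derivative_eq_intros\<close>)
  finally show ?thesis by simp
qed

locale maxexp = prob_space +
  fixes V :: "nat \<Rightarrow> 'a \<Rightarrow> real" and N :: nat
  assumes N: "0 < N"
  and V_exp: "\<And>n. n < N \<Longrightarrow> distributed M lborel (V n) (exponential_density 1)"
  and V_ind: "\<And>t. prob (\<Inter>n\<in>{..<N}. V n -` {..t} \<inter> space M) = (\<Prod>n\<in>{..<N}. prob (V n -` {..t} \<inter> space M))"
  and V_nn: "\<And>n \<omega>. 0 \<le> V n \<omega>"
begin

definition Xm where "Xm \<omega> = Max ((\<lambda>n. V n \<omega>) ` {..<N})"

lemma V_meas[measurable]: "n < N \<Longrightarrow> V n \<in> borel_measurable M"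
  using distributed_measurable[OF V_exp] by simp

lemma Xm_meas[measurable]: "Xm \<in> borel_measurable M"
  unfolding Xm_def by (rule borel_measurable_Max) auto

lemma Xm_nn: "0 \<le> Xm \<omega>"
proof -
  have "V 0 \<omega> \<le> Xm \<omega>" unfolding Xm_def using N by (intro Max_ge) auto
  then show ?thesis using V_nn[of 0 \<omega>] by simp
qed

lemma Xm_tail: assumes t: "0 \<le> t"
  shows "emeasure M {\<omega>\<in>space M. t < Xm \<omega>} = ennreal (1 - (1 - exp (- t))^N)"
proof -
  have "{\<omega>\<in>space M. Xm \<omega> \<le> t} = (\<Inter>n\<in>{..<N}. V n -` {..t} \<inter> space M)"
    using N by (auto simp: Xm_def)
  moreover have "prob (\<Inter>n\<in>{..<N}. V n -` {..t} \<inter> space M) = (\<Prod>n\<in>{..<N}. prob (V n -` {..t} \<inter> space M))"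
    by (rule V_ind)
  ultimately have "prob {\<omega>\<in>space M. Xm \<omega> \<le> t} = (\<Prod>n\<in>{..<N}. prob (V n -` {..t} \<inter> space M))"
    by simp
  also have "\<dots> = (\<Prod>n\<in>{..<N}. 1 - exp (- t))"
  proof (rule prod.cong)
    fix n assume "n \<in> {..<N}"
    then have "prob {\<omega>\<in>space M. V n \<omega> \<le> t} = 1 - exp (- t * 1)"
      using exponential_distributedD_le[OF V_exp t] by simp
    then show "prob (V n -` {..t} \<inter> space M) = 1 - exp (- t)"
      by (simp add: vimage_def Int_def conj_commute)
  qed simp
  finally have "prob {\<omega>\<in>space M. Xm \<omega> \<le> t} = (1 - exp (- t))^N" by simp
  moreover have "prob {\<omega>\<in>space M. t < Xm \<omega>} = 1 - prob {\<omega>\<in>space M. Xm \<omega> \<le> t}"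
    by (subst prob_compl[symmetric]) (auto intro!: arg_cong[where f=prob])
  ultimately show ?thesis by (simp add: emeasure_eq_measure)
qed

lemma Xm_moment1: "has_bochner_integral M Xm (harm N)"
proof (rule has_bochner_integral_nn_integral)
  have "(\<integral>\<^sup>+\<omega>. ennreal (Xm \<omega>) \<partial>M) = (\<integral>\<^sup>+\<omega>. (\<integral>\<^sup>+t. ennreal 1 * indicator {0..<Xm \<omega>} t \<partial>lborel) \<partial>M)"
    by (intro nn_integral_cong) (simp add: Xm_nn)
  also have "\<dots> = (\<integral>\<^sup>+t. ennreal 1 * indicator {0..} t * emeasure M {\<omega>\<in>space M. t < Xm \<omega>} \<partial>lborel)"
    by (rule layer_cake) auto
  also have "\<dots> = (\<integral>\<^sup>+t. ennreal (1 - (1 - exp (- t))^N) * indicator {0..} t \<partial>lborel)"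
    by (intro nn_integral_cong) (auto simp: Xm_tail split: split_indicator)
  also have "\<dots> = ennreal (harm N)" by (rule int_G)
  finally show "(\<integral>\<^sup>+\<omega>. ennreal (Xm \<omega>) \<partial>M) = ennreal (harm N)" .
qed (auto simp: Xm_nn harm_nonneg)

lemma Xm_moment2: "has_bochner_integral M (\<lambda>\<omega>. (Xm \<omega>)\<^sup>2) (\<Sum>k<N. 2 * harm (Suc k) / real (Suc k))"
proof (rule has_bochner_integral_nn_integral)
  have nn: "0 \<le> 2 * t * (exp (- t) * (1 - exp (- t))^k)" if "0 \<le> t" for t :: real and k
    using that by (intro mult_nonneg_nonneg zero_le_power) auto
  have "(\<integral>\<^sup>+\<omega>. ennreal ((Xm \<omega>)\<^sup>2) \<partial>M) = (\<integral>\<^sup>+\<omega>. (\<integral>\<^sup>+t. ennreal (2 * t) * indicator {0..<Xm \<omega>} t \<partial>lborel) \<partial>M)"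
    by (intro nn_integral_cong) (simp add: Xm_nn lc_two)
  also have "\<dots> = (\<integral>\<^sup>+t. ennreal (2 * t) * indicator {0..} t * emeasure M {\<omega>\<in>space M. t < Xm \<omega>} \<partial>lborel)"
    by (rule layer_cake) auto
  also have "\<dots> = (\<integral>\<^sup>+t. (\<Sum>k<N. ennreal (2 * t * (exp (- t) * (1 - exp (- t))^k)) * indicator {0..} t) \<partial>lborel)"
  proof (intro nn_integral_cong)
    fix t :: real
    show "ennreal (2 * t) * indicator {0..} t * emeasure M {\<omega> \<in> space M. t < Xm \<omega>} =
         (\<Sum>k<N. ennreal (2 * t * (exp (- t) * (1 - exp (- t))^k)) * indicator {0..} t)"
    proof (cases "0 \<le> t")
      case True
      have "ennreal (2 * t) * indicator {0..} t * emeasure M {\<omega> \<in> space M. t < Xm \<omega>}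
        = ennreal (2 * t * (1 - (1 - exp (- t))^N))"
      proof -
        have "(1 - exp (- t))^N \<le> 1" using True by (intro power_le_one) auto
        then show ?thesis using True by (simp add: Xm_tail ennreal_mult[symmetric])
      qed
      also have "2 * t * (1 - (1 - exp (- t))^N) = (\<Sum>k<N. 2 * t * (exp (- t) * (1 - exp (- t))^k))"
        by (simp add: G_sum sum_distrib_left)
      also have "ennreal \<dots> = (\<Sum>k<N. ennreal (2 * t * (exp (- t) * (1 - exp (- t))^k)))"
        by (rule sum_ennreal[symmetric]) (use True nn in auto)
      finally show ?thesis using True by simp
    qed simp
  qed
  also have "\<dots> = (\<Sum>k<N. (\<integral>\<^sup>+t. ennreal (2 * t * (exp (- t) * (1 - exp (- t))^k)) * indicator {0..} t \<partial>lborel))"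
    by (rule nn_integral_sum) auto
  also have "\<dots> = (\<Sum>k<N. ennreal (2 * harm (Suc k) / real (Suc k)))" by (simp add: int_tgk)
  also have "\<dots> = ennreal (\<Sum>k<N. 2 * harm (Suc k) / real (Suc k))"
    by (rule sum_ennreal) (auto intro!: divide_nonneg_nonneg harm_nonneg)
  finally show "(\<integral>\<^sup>+\<omega>. ennreal ((Xm \<omega>)\<^sup>2) \<partial>M) = ennreal (\<Sum>k<N. 2 * harm (Suc k) / real (Suc k))" .
qed (auto intro!: sum_nonneg divide_nonneg_nonneg harm_nonneg)

end

lemma (in prob_space) sq_expand:
  fixes f :: "'a \<Rightarrow> real"
  assumes f: "integrable M f" and f2: "integrable M (\<lambda>\<omega>. (f \<omega>)\<^sup>2)"
  shows "integrable M (\<lambda>\<omega>. (f \<omega> - c)\<^sup>2)"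
    "(\<integral>\<omega>. (f \<omega> - c)\<^sup>2 \<partial>M) = (\<integral>\<omega>. (f \<omega>)\<^sup>2 \<partial>M) - 2 * c * (\<integral>\<omega>. f \<omega> \<partial>M) + c\<^sup>2"
proof -
  have eq: "(\<lambda>\<omega>. (f \<omega> - c)\<^sup>2) = (\<lambda>\<omega>. ((f \<omega>)\<^sup>2 - (2 * c) * f \<omega>) + c\<^sup>2)"
    by (auto simp: fun_eq_iff power2_diff)
  have i1: "integrable M (\<lambda>\<omega>. (f \<omega>)\<^sup>2 - (2 * c) * f \<omega>)"
    using f f2 by auto
  show "integrable M (\<lambda>\<omega>. (f \<omega> - c)\<^sup>2)" unfolding eq using i1 by auto
  show "(\<integral>\<omega>. (f \<omega> - c)\<^sup>2 \<partial>M) = (\<integral>\<omega>. (f \<omega>)\<^sup>2 \<partial>M) - 2 * c * (\<integral>\<omega>. f \<omega> \<partial>M) + c\<^sup>2"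
    unfolding eq using i1 f f2 by (simp add: integral_add integral_diff prob_space)
qed

lemma (in prob_space) var_le:
  fixes f :: "'a \<Rightarrow> real"
  assumes f: "integrable M f" and f2: "integrable M (\<lambda>\<omega>. (f \<omega>)\<^sup>2)"
  shows "var M f \<le> (\<integral>\<omega>. (f \<omega> - c)\<^sup>2 \<partial>M)"
proof -
  have "var M f = (\<integral>\<omega>. (f \<omega>)\<^sup>2 \<partial>M) - 2 * (\<integral>\<omega>. f \<omega> \<partial>M) * (\<integral>\<omega>. f \<omega> \<partial>M) + (\<integral>\<omega>. f \<omega> \<partial>M)\<^sup>2"
    unfolding var_def by (rule sq_expand[OF f f2])
  moreover have "(\<integral>\<omega>. (f \<omega> - c)\<^sup>2 \<partial>M) = (\<integral>\<omega>. (f \<omega>)\<^sup>2 \<partial>M) - 2 * c * (\<integral>\<omega>. f \<omega> \<partial>M) + c\<^sup>2"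
    by (rule sq_expand[OF f f2])
  moreover have "0 \<le> ((\<integral>\<omega>. f \<omega> \<partial>M) - c)\<^sup>2" by simp
  ultimately show ?thesis by (simp add: power2_eq_square algebra_simps)
qed

lemma sq3: "(p + q + r)\<^sup>2 \<le> 3 * (p\<^sup>2 + q\<^sup>2 + (r::real)\<^sup>2)"
proof -
  have "0 \<le> (p - q)\<^sup>2 + (q - r)\<^sup>2 + (p - r)\<^sup>2" by simp
  then show ?thesis by (simp add: power2_eq_square algebra_simps)
qed

lemma sq_scale: "0 \<le> a \<Longrightarrow> a \<le> 1 \<Longrightarrow> (a * w)\<^sup>2 \<le> (w::real)\<^sup>2"
proof -
  assume "0 \<le> a" "a \<le> 1"
  then have "a\<^sup>2 \<le> 1" by (simp add: power_le_one)
  then have "a\<^sup>2 * w\<^sup>2 \<le> 1 * w\<^sup>2" by (intro mult_right_mono) auto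
  then show ?thesis by (simp add: power_mult_distrib)
qed

lemma amgm_abs:
  fixes c x z s :: real
  assumes "c\<^sup>2 \<le> 4 * x * z" "0 \<le> x" "0 \<le> z" "0 < s"
  shows "\<bar>c\<bar> \<le> s * x + z / s"
proof -
  have xz: "(s * x) * (z / s) = x * z" using assms(4) by simp
  have id: "(s * x + z / s)\<^sup>2 = (s * x - z / s)\<^sup>2 + 4 * ((s * x) * (z / s))"
    by (simp add: power2_eq_square algebra_simps)
  have "0 \<le> (s * x - z / s)\<^sup>2" by simp
  then have "4 * x * z \<le> (s * x + z / s)\<^sup>2" unfolding id xz by simp
  then have "c\<^sup>2 \<le> (s * x + z / s)\<^sup>2" using assms(1) by linarith
  moreover have "0 \<le> s * x + z / s" using assms(2,3,4) by simp
  ultimately show ?thesis using abs_le_square_iff[of c "s * x + z / s"] by simp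
qed

lemma (in prob_space) est_bounds:
  fixes X Z Y :: "'a \<Rightarrow> real" and H a :: real
  assumes [measurable]: "X \<in> borel_measurable M" "Z \<in> borel_measurable M" "Y \<in> borel_measurable M"
  and iX: "integrable M X" and iX2: "integrable M (\<lambda>\<omega>. (X \<omega>)\<^sup>2)"
  and iZ: "integrable M Z" and iZ2: "integrable M (\<lambda>\<omega>. (Z \<omega>)\<^sup>2)"
  and iXZ: "integrable M (\<lambda>\<omega>. X \<omega> * Z \<omega>)"
  and EX: "expectation X = H" and EX2: "expectation (\<lambda>\<omega>. (X \<omega>)\<^sup>2) \<le> H\<^sup>2 + H"
  and EZ: "expectation Z = 1" and EZ2: "expectation (\<lambda>\<omega>. (Z \<omega>)\<^sup>2) = 2"
  and EXZ: "expectation (\<lambda>\<omega>. X \<omega> * Z \<omega>) = H"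
  and nnX: "\<And>\<omega>. 0 \<le> X \<omega>" and nnZ: "\<And>\<omega>. 0 \<le> Z \<omega>" and H1: "1 \<le> H"
  and a0: "0 \<le> a" and a1: "a \<le> 1"
  and Cb: "\<And>\<omega>. (Y \<omega> - a * X \<omega> - (1 - a) * Z \<omega>)\<^sup>2 \<le> 4 * X \<omega> * Z \<omega>"
  shows "\<bar>expectation (\<lambda>\<omega>. Y \<omega> / H) - a\<bar> \<le> (1 - a) / H + 2 / sqrt H"
    and "var M (\<lambda>\<omega>. Y \<omega> / H) \<le> 18 / H"
proof -
  define C where "C \<omega> = Y \<omega> - a * X \<omega> - (1 - a) * Z \<omega>" for \<omega>
  have Cm[measurable]: "C \<in> borel_measurable M" unfolding C_def by measurable
  have H0: "0 < H" using H1 by simp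
  have iC2: "integrable M (\<lambda>\<omega>. (C \<omega>)\<^sup>2)"
  proof (rule Bochner_Integration.integrable_bound[where f="\<lambda>\<omega>. 4 * (X \<omega> * Z \<omega>)"])
    show "integrable M (\<lambda>\<omega>. 4 * (X \<omega> * Z \<omega>))" using iXZ by simp
    show "AE \<omega> in M. norm ((C \<omega>)\<^sup>2) \<le> norm (4 * (X \<omega> * Z \<omega>))"
      using Cb nnX nnZ by (auto simp: C_def mult.assoc)
  qed simp
  have Cabs: "\<bar>C \<omega>\<bar> \<le> s * X \<omega> + Z \<omega> / s" if "0 < s" for s \<omega>
    using amgm_abs[OF Cb[of \<omega>] nnX nnZ that] by (simp add: C_def)
  have iC: "integrable M C"
  proof (rule Bochner_Integration.integrable_bound[where f="\<lambda>\<omega>. 1 * X \<omega> + Z \<omega> / 1"])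
    show "integrable M (\<lambda>\<omega>. 1 * X \<omega> + Z \<omega> / 1)" using iX iZ by simp
    show "AE \<omega> in M. norm (C \<omega>) \<le> norm (1 * X \<omega> + Z \<omega> / 1)"
      using Cabs[of 1] nnX nnZ by auto
  qed simp
  have Yeq: "Y \<omega> = C \<omega> + a * X \<omega> + (1 - a) * Z \<omega>" for \<omega> by (simp add: C_def)
  have iY: "integrable M Y"
    unfolding Yeq[abs_def] using iC iX iZ by auto
  have EY: "expectation Y = expectation C + a * H + (1 - a)"
    unfolding Yeq[abs_def] using iC iX iZ by (simp add: EX EZ)
  define s where "s = 1 / sqrt H"
  have s0: "0 < s" using H0 by (simp add: s_def)
  have "\<bar>expectation C\<bar> \<le> expectation (\<lambda>\<omega>. s * X \<omega> + Z \<omega> / s)"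
  proof -
    have "\<bar>expectation C\<bar> \<le> expectation (\<lambda>\<omega>. \<bar>C \<omega>\<bar>)" using integral_norm_bound[of M C] by simp
    also have "\<dots> \<le> expectation (\<lambda>\<omega>. s * X \<omega> + Z \<omega> / s)"
      using iC iX iZ Cabs[OF s0] by (intro integral_mono) auto
    finally show ?thesis .
  qed
  also have "expectation (\<lambda>\<omega>. s * X \<omega> + Z \<omega> / s) = s * H + 1 / s"
    using iX iZ by (simp add: EX EZ)
  also have "s * H + 1 / s = 2 * sqrt H"
  proof -
    have sp: "0 < sqrt H" using H0 by simp
    have sq: "sqrt H * sqrt H = H" using H0 by simp
    have "s * H = H / sqrt H" unfolding s_def by simp
    also have "\<dots> = sqrt H" using sp sq by (simp add: divide_eq_eq)
    finally have "s * H = sqrt H" .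
    moreover have "1 / s = sqrt H" by (simp add: s_def)
    ultimately show ?thesis by simp
  qed
  finally have ECb: "\<bar>expectation C\<bar> \<le> 2 * sqrt H" .
  have "expectation (\<lambda>\<omega>. Y \<omega> / H) = expectation Y / H" by simp
  then have "expectation (\<lambda>\<omega>. Y \<omega> / H) - a = (1 - a) / H + expectation C / H"
    using H0 by (simp add: EY field_simps)
  moreover have "\<bar>expectation C / H\<bar> \<le> 2 / sqrt H"
  proof -
    have "\<bar>expectation C / H\<bar> = \<bar>expectation C\<bar> / H" using H0 by simp
    also have "\<dots> \<le> 2 * sqrt H / H" using ECb H0 by (intro divide_right_mono) auto
    also have "2 * sqrt H / H = 2 / sqrt H"
    proof -
      have sp: "0 < sqrt H" using H0 by simp
      have sq: "sqrt H * sqrt H = H" using H0 by simp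
      have "2 * sqrt H / H = 2 * sqrt H / (sqrt H * sqrt H)" by (simp only: sq)
      also have "\<dots> = (2 / sqrt H) * (sqrt H / sqrt H)" by (simp only: times_divide_times_eq)
      also have "\<dots> = 2 / sqrt H" using sp by simp
      finally show ?thesis .
    qed
    finally show ?thesis .
  qed
  moreover have "0 \<le> (1 - a) / H" using a1 H0 by simp
  ultimately show "\<bar>expectation (\<lambda>\<omega>. Y \<omega> / H) - a\<bar> \<le> (1 - a) / H + 2 / sqrt H" by linarith
  have iY2: "integrable M (\<lambda>\<omega>. (Y \<omega>)\<^sup>2)"
  proof (rule Bochner_Integration.integrable_bound[where f="\<lambda>\<omega>. 3 * ((C \<omega>)\<^sup>2 + (X \<omega>)\<^sup>2 + (Z \<omega>)\<^sup>2)"])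
    show "integrable M (\<lambda>\<omega>. 3 * ((C \<omega>)\<^sup>2 + (X \<omega>)\<^sup>2 + (Z \<omega>)\<^sup>2))" using iC2 iX2 iZ2 by auto
    show "AE \<omega> in M. norm ((Y \<omega>)\<^sup>2) \<le> norm (3 * ((C \<omega>)\<^sup>2 + (X \<omega>)\<^sup>2 + (Z \<omega>)\<^sup>2))"
    proof (rule AE_I2)
      fix \<omega>
      have "(Y \<omega>)\<^sup>2 \<le> 3 * ((C \<omega>)\<^sup>2 + (a * X \<omega>)\<^sup>2 + ((1 - a) * Z \<omega>)\<^sup>2)"
        unfolding Yeq by (rule sq3)
      also have "\<dots> \<le> 3 * ((C \<omega>)\<^sup>2 + (X \<omega>)\<^sup>2 + (Z \<omega>)\<^sup>2)"
        using sq_scale[OF a0 a1, of "X \<omega>"] sq_scale[of "1 - a" "Z \<omega>"] a0 a1 by auto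
      finally show "norm ((Y \<omega>)\<^sup>2) \<le> norm (3 * ((C \<omega>)\<^sup>2 + (X \<omega>)\<^sup>2 + (Z \<omega>)\<^sup>2))" by simp
    qed
  qed simp
  have iYH: "integrable M (\<lambda>\<omega>. Y \<omega> / H)" using iY by simp
  have iYH2: "integrable M (\<lambda>\<omega>. (Y \<omega> / H)\<^sup>2)" using iY2 by (simp add: power_divide)
  define c where "c = a + (1 - a) / H"
  have "var M (\<lambda>\<omega>. Y \<omega> / H) \<le> (\<integral>\<omega>. (Y \<omega> / H - c)\<^sup>2 \<partial>M)"
    by (rule var_le[OF iYH iYH2])
  also have "\<dots> \<le> (\<integral>\<omega>. 3 * ((X \<omega> - H)\<^sup>2 + (Z \<omega> - 1)\<^sup>2 + 4 * (X \<omega> * Z \<omega>)) / H\<^sup>2 \<partial>M)"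
  proof (rule integral_mono)
    show "integrable M (\<lambda>\<omega>. (Y \<omega> / H - c)\<^sup>2)" by (rule sq_expand[OF iYH iYH2])
    show "integrable M (\<lambda>\<omega>. 3 * ((X \<omega> - H)\<^sup>2 + (Z \<omega> - 1)\<^sup>2 + 4 * (X \<omega> * Z \<omega>)) / H\<^sup>2)"
      using sq_expand(1)[OF iX iX2, of H] sq_expand(1)[OF iZ iZ2, of 1] iXZ by auto
    fix \<omega> assume "\<omega> \<in> space M"
    have eq: "Y \<omega> / H - c = (a * (X \<omega> - H) + (1 - a) * (Z \<omega> - 1) + C \<omega>) / H"
      using H0 by (simp add: c_def Yeq field_simps)
    have "(Y \<omega> / H - c)\<^sup>2 = (a * (X \<omega> - H) + (1 - a) * (Z \<omega> - 1) + C \<omega>)\<^sup>2 / H\<^sup>2"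
      unfolding eq by (simp add: power_divide)
    also have "\<dots> \<le> 3 * ((a * (X \<omega> - H))\<^sup>2 + ((1 - a) * (Z \<omega> - 1))\<^sup>2 + (C \<omega>)\<^sup>2) / H\<^sup>2"
      by (intro divide_right_mono sq3) simp
    also have "\<dots> \<le> 3 * ((X \<omega> - H)\<^sup>2 + (Z \<omega> - 1)\<^sup>2 + 4 * (X \<omega> * Z \<omega>)) / H\<^sup>2"
    proof (intro divide_right_mono mult_left_mono add_mono)
      show "(a * (X \<omega> - H))\<^sup>2 \<le> (X \<omega> - H)\<^sup>2"
        using a0 a1 by (rule sq_scale)
      show "((1 - a) * (Z \<omega> - 1))\<^sup>2 \<le> (Z \<omega> - 1)\<^sup>2"
        using a0 a1 by (intro sq_scale) auto
      show "(C \<omega>)\<^sup>2 \<le> 4 * (X \<omega> * Z \<omega>)" using Cb[of \<omega>] by (simp add: C_def mult.assoc)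
    qed auto
    finally show "(Y \<omega> / H - c)\<^sup>2 \<le> 3 * ((X \<omega> - H)\<^sup>2 + (Z \<omega> - 1)\<^sup>2 + 4 * (X \<omega> * Z \<omega>)) / H\<^sup>2" .
  qed
  also have "\<dots> = 3 * ((\<integral>\<omega>. (X \<omega> - H)\<^sup>2 \<partial>M) + (\<integral>\<omega>. (Z \<omega> - 1)\<^sup>2 \<partial>M) + 4 * H) / H\<^sup>2"
    using sq_expand(1)[OF iX iX2, of H] sq_expand(1)[OF iZ iZ2, of 1] iXZ
    by (simp add: EXZ)
  also have "(\<integral>\<omega>. (X \<omega> - H)\<^sup>2 \<partial>M) \<le> H"
    using sq_expand(2)[OF iX iX2, of H] EX2 by (simp add: EX power2_eq_square)
  also have "(\<integral>\<omega>. (Z \<omega> - 1)\<^sup>2 \<partial>M) = 1"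
    using sq_expand(2)[OF iZ iZ2, of 1] by (simp add: EZ EZ2)
  also have "3 * (H + 1 + 4 * H) / H\<^sup>2 \<le> 18 / H"
    using H1 by (simp add: field_simps power2_eq_square)
  finally show "var M (\<lambda>\<omega>. Y \<omega> / H) \<le> 18 / H"
    using H0 by (simp add: divide_right_mono)
qed

lemma cross_bound:
  fixes \<rho> u v :: complex and r :: real
  assumes r1: "cmod \<rho> \<le> 1" and r0: "0 \<le> r" and rr: "r\<^sup>2 = 1 - (cmod \<rho>)\<^sup>2"
  shows "((cmod (\<rho> * u + complex_of_real r * v))\<^sup>2 - (cmod \<rho>)\<^sup>2 * (cmod u)\<^sup>2 - (1 - (cmod \<rho>)\<^sup>2) * (cmod v)\<^sup>2)\<^sup>2
      \<le> 4 * (cmod u)\<^sup>2 * (cmod v)\<^sup>2"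
proof -
  define p where "p = \<rho> * u"
  define q where "q = complex_of_real r * v"
  have np: "(cmod p)\<^sup>2 = (cmod \<rho>)\<^sup>2 * (cmod u)\<^sup>2" by (simp add: p_def norm_mult power_mult_distrib)
  have nq: "(cmod q)\<^sup>2 = (1 - (cmod \<rho>)\<^sup>2) * (cmod v)\<^sup>2"
    using r0 by (simp add: q_def norm_mult power_mult_distrib rr[symmetric])
  have "(cmod (p + q))\<^sup>2 = (cmod p)\<^sup>2 + 2 * (p \<bullet> q) + (cmod q)\<^sup>2"
    by (simp add: power2_norm_eq_inner inner_add_left inner_add_right inner_commute)
  then have "(cmod (p + q))\<^sup>2 - (cmod \<rho>)\<^sup>2 * (cmod u)\<^sup>2 - (1 - (cmod \<rho>)\<^sup>2) * (cmod v)\<^sup>2 = 2 * (p \<bullet> q)"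
    using np nq by simp
  moreover have "(p \<bullet> q)\<^sup>2 \<le> (cmod p)\<^sup>2 * (cmod q)\<^sup>2"
    using Cauchy_Schwarz_ineq[of p q] by (simp add: power2_norm_eq_inner)
  moreover have "(cmod p)\<^sup>2 * (cmod q)\<^sup>2 \<le> (cmod u)\<^sup>2 * (cmod v)\<^sup>2"
  proof -
    have a1: "(cmod \<rho>)\<^sup>2 \<le> 1" using r1 by (simp add: power_le_one)
    have "(cmod p)\<^sup>2 \<le> (cmod u)\<^sup>2" unfolding np using a1 by (intro mult_left_le_one_le) auto
    moreover have "(cmod q)\<^sup>2 \<le> (cmod v)\<^sup>2" unfolding nq using a1 by (intro mult_left_le_one_le) auto
    ultimately show ?thesis by (intro mult_mono) auto
  qed
  ultimately show ?thesis unfolding p_def q_def by (simp add: power_mult_distrib)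
qed

lemma (in prob_space) exp_moments:
  assumes "distributed M lborel X (exponential_density 1)"
  shows "integrable M (\<lambda>\<omega>. X \<omega> ^ i)" "expectation (\<lambda>\<omega>. X \<omega> ^ i) = fact i"
  using erlang_ith_moment_integrable[OF _ assms, of i] erlang_ith_moment[OF _ assms, of i] by simp_all

lemma main_N:
  fixes M :: "'a measure"
    and x z y :: "nat \<Rightarrow> 'a \<Rightarrow> complex"
    and \<rho> :: complex and N :: nat
  assumes "prob_space M"
    and indep: "prob_space.indep_vars M (\<lambda>_. borel)
                  (\<lambda>i. case i of Inl n \<Rightarrow> x n | Inr n \<Rightarrow> z n) UNIV"
    and x_CN: "\<And>n. distributed M lborel (x n) (\<lambda>w. ennreal (cn_density w))"
    and z_CN: "\<And>n. distributed M lborel (z n) (\<lambda>w. ennreal (cn_density w))"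
    and rho_le: "cmod \<rho> \<le> 1"
    and y_def: "\<And>n \<omega>. y n \<omega> = \<rho> * x n \<omega> + complex_of_real (sqrt (1 - (cmod \<rho>)\<^sup>2)) * z n \<omega>"
    and N: "0 < N"
  shows "\<bar>(\<integral>\<omega>. mmie_est M x y N \<omega> \<partial>M) - (cmod \<rho>)\<^sup>2\<bar> \<le> (1 - (cmod \<rho>)\<^sup>2) / harm N + 2 / sqrt (harm N)"
    "var M (mmie_est M x y N) \<le> 18 / harm N"
proof -
  interpret P: prob_space M by fact
  define Xf where "Xf = (\<lambda>i. case i of Inl n \<Rightarrow> x n | Inr n \<Rightarrow> z n)"
  have indep': "P.indep_vars (\<lambda>_. borel) Xf UNIV" using indep by (simp add: Xf_def)
  have xm[measurable]: "x n \<in> borel_measurable M" for n using distributed_measurable[OF x_CN[of n]] by simp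
  have zm[measurable]: "z n \<in> borel_measurable M" for n using distributed_measurable[OF z_CN[of n]] by simp
  define V where "V n \<omega> = (cmod (x n \<omega>))\<^sup>2" for n \<omega>
  define W where "W n \<omega> = (cmod (z n \<omega>))\<^sup>2" for n \<omega>
  have Vm[measurable]: "V n \<in> borel_measurable M" for n unfolding V_def by measurable
  have Wm[measurable]: "W n \<in> borel_measurable M" for n unfolding W_def by measurable
  have V_exp: "distributed M lborel (V n) (exponential_density 1)" for n
    unfolding V_def[abs_def] by (rule P.cn_sq_exponential[OF x_CN])
  have W_exp: "distributed M lborel (W n) (exponential_density 1)" for n
    unfolding W_def[abs_def] by (rule P.cn_sq_exponential[OF z_CN])
  have Vnn: "0 \<le> V n \<omega>" for n \<omega> by (simp add: V_def)
  have Wnn: "0 \<le> W n \<omega>" for n \<omega> by (simp add: W_def)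
  define J where "J \<omega> = argmax_idx x N \<omega>" for \<omega>
  have J_eq: "J \<omega> = (ARG_MAX (\<lambda>n. V n \<omega>) n. n < N)" for \<omega> by (simp add: J_def argmax_idx_def V_def)
  have Jm[measurable]: "J \<in> measurable M (count_space UNIV)"
    unfolding J_eq[abs_def] by (rule measurable_argmax) simp
  have JN: "J \<omega> < N" for \<omega> unfolding J_eq using argmax_props(1)[OF N] .
  have Jmax: "m < N \<Longrightarrow> V m \<omega> \<le> V (J \<omega>) \<omega>" for m \<omega> unfolding J_eq using argmax_props(2)[OF N] .
  define X where "X \<omega> = V (J \<omega>) \<omega>" for \<omega>
  define Z where "Z \<omega> = W (J \<omega>) \<omega>" for \<omega>
  define Y where "Y \<omega> = (cmod (y (J \<omega>) \<omega>))\<^sup>2" for \<omega>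
  have Xm[measurable]: "X \<in> borel_measurable M"
    unfolding X_def by (rule measurable_compose_countable[OF _ Jm]) simp
  have Zm[measurable]: "Z \<in> borel_measurable M"
    unfolding Z_def by (rule measurable_compose_countable[OF _ Jm]) simp
  have ym[measurable]: "y n \<in> borel_measurable M" for n
    unfolding y_def[abs_def] by measurable
  have Ym[measurable]: "Y \<in> borel_measurable M"
    unfolding Y_def by (rule measurable_compose_countable[OF _ Jm]) simp
  have X_Max: "X \<omega> = Max ((\<lambda>n. V n \<omega>) ` {..<N})" for \<omega>
    unfolding X_def using JN[of \<omega>] Jmax[of _ \<omega>] by (intro Max_eqI[symmetric]) auto
  have V_ind: "P.prob (\<Inter>n\<in>{..<N}. V n -` {..t} \<inter> space M) = (\<Prod>n\<in>{..<N}. P.prob (V n -` {..t} \<inter> space M))" for t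
  proof -
    have iv: "P.indep_vars (\<lambda>_. borel) (\<lambda>k \<omega>. (cmod (Xf k \<omega>))\<^sup>2) UNIV"
      by (rule P.indep_vars_compose2[OF indep']) simp
    have "P.prob (\<Inter>k\<in>Inl ` {..<N}. (\<lambda>\<omega>. (cmod (Xf k \<omega>))\<^sup>2) -` {..t} \<inter> space M)
      = (\<Prod>k\<in>Inl ` {..<N}. P.prob ((\<lambda>\<omega>. (cmod (Xf k \<omega>))\<^sup>2) -` {..t} \<inter> space M))"
      by (rule P.indep_varsD[OF iv]) (use N in auto)
    moreover have "(\<Inter>k\<in>Inl ` {..<N}. (\<lambda>\<omega>. (cmod (Xf k \<omega>))\<^sup>2) -` {..t} \<inter> space M) = (\<Inter>n\<in>{..<N}. V n -` {..t} \<inter> space M)"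
      by (auto simp: Xf_def V_def)
    moreover have "(\<Prod>k\<in>Inl ` {..<N}. P.prob ((\<lambda>\<omega>. (cmod (Xf k \<omega>))\<^sup>2) -` {..t} \<inter> space M)) = (\<Prod>n\<in>{..<N}. P.prob (V n -` {..t} \<inter> space M))"
      by (simp add: prod.reindex Xf_def V_def[abs_def])
    ultimately show ?thesis by simp
  qed
  have MEI: "maxexp M V N"
    by (rule maxexp.intro[OF \<open>prob_space M\<close> maxexp_axioms.intro[OF N V_exp V_ind Vnn]])
  interpret ME: maxexp M V N by (rule MEI)
  have XX: "ME.Xm = X" by (auto simp: fun_eq_iff ME.Xm_def X_Max)
  have hX: "has_bochner_integral M X (harm N)" using ME.Xm_moment1 by (simp add: XX)
  have hX2: "has_bochner_integral M (\<lambda>\<omega>. (X \<omega>)\<^sup>2) (\<Sum>k<N. 2 * harm (Suc k) / real (Suc k))"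
    using ME.Xm_moment2 by (simp add: XX)
  have i1: "integrable M (\<lambda>\<omega>. if J \<omega> = n then V n \<omega> ^ i else 0)" for n i
  proof (rule Bochner_Integration.integrable_bound[where f="\<lambda>\<omega>. V n \<omega> ^ i"])
    show "integrable M (\<lambda>\<omega>. V n \<omega> ^ i)" by (rule P.exp_moments(1)[OF V_exp])
    show "(\<lambda>\<omega>. if J \<omega> = n then V n \<omega> ^ i else 0) \<in> borel_measurable M" by measurable
    show "AE \<omega> in M. norm (if J \<omega> = n then V n \<omega> ^ i else 0) \<le> norm (V n \<omega> ^ i)" by auto
  qed
  have fac: "integrable M (\<lambda>\<omega>. (if J \<omega> = n then V n \<omega> ^ i else 0) * W n \<omega> ^ j) \<and>
      P.expectation (\<lambda>\<omega>. (if J \<omega> = n then V n \<omega> ^ i else 0) * W n \<omega> ^ j)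
        = P.expectation (\<lambda>\<omega>. if J \<omega> = n then V n \<omega> ^ i else 0) * fact j" if n: "n < N" for n i j
  proof -
    define A :: "(nat + nat) set" where "A = Inl ` {..<N}"
    define B :: "(nat + nat) set" where "B = {Inr n}"
    have iv: "P.indep_var (PiM A (\<lambda>_. borel)) (\<lambda>\<omega>. restrict (\<lambda>k. Xf k \<omega>) A) (PiM B (\<lambda>_. borel)) (\<lambda>\<omega>. restrict (\<lambda>k. Xf k \<omega>) B)"
      by (rule P.indep_var_restrict[OF indep']) (auto simp: A_def B_def)
    define g where "g f = (ARG_MAX (\<lambda>m. if m < N then (cmod (f (Inl m)))\<^sup>2 else 0) m. m < N)" for f :: "nat + nat \<Rightarrow> complex"
    have gm[measurable]: "g \<in> measurable (PiM A (\<lambda>_. borel)) (count_space UNIV)"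
      unfolding g_def[abs_def]
    proof (rule measurable_argmax)
      fix m
      show "(\<lambda>f. if m < N then (cmod (f (Inl m)))\<^sup>2 else 0) \<in> borel_measurable (PiM A (\<lambda>_. borel))"
      proof (cases "m < N")
        case True
        then have "Inl m \<in> A" by (simp add: A_def)
        then have [measurable]: "(\<lambda>f. f (Inl m)) \<in> measurable (PiM A (\<lambda>_. borel)) borel"
          by (rule measurable_component_singleton)
        show ?thesis using True by simp
      qed simp
    qed
    define Y1 where "Y1 f = (if g f = n then ((cmod (f (Inl n)))\<^sup>2)^i else 0)" for f
    define Y2 where "Y2 f = ((cmod (f (Inr n)))\<^sup>2)^j" for f :: "nat + nat \<Rightarrow> complex"
    have Y1m: "Y1 \<in> borel_measurable (PiM A (\<lambda>_. borel))"
    proof -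
      have "Inl n \<in> A" using n by (simp add: A_def)
      then have [measurable]: "(\<lambda>f. f (Inl n)) \<in> measurable (PiM A (\<lambda>_. borel)) borel"
        by (rule measurable_component_singleton)
      show ?thesis unfolding Y1_def[abs_def] by measurable
    qed
    have Y2m: "Y2 \<in> borel_measurable (PiM B (\<lambda>_. borel))"
    proof -
      have "Inr n \<in> B" by (simp add: B_def)
      then have [measurable]: "(\<lambda>f. f (Inr n)) \<in> measurable (PiM B (\<lambda>_. borel)) borel"
        by (rule measurable_component_singleton)
      show ?thesis unfolding Y2_def[abs_def] by measurable
    qed
    have iv2: "P.indep_var borel (Y1 \<circ> (\<lambda>\<omega>. restrict (\<lambda>k. Xf k \<omega>) A)) borel (Y2 \<circ> (\<lambda>\<omega>. restrict (\<lambda>k. Xf k \<omega>) B))"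
      by (rule P.indep_var_compose[OF iv Y1m Y2m])
    have e1: "Y1 \<circ> (\<lambda>\<omega>. restrict (\<lambda>k. Xf k \<omega>) A) = (\<lambda>\<omega>. if J \<omega> = n then V n \<omega> ^ i else 0)"
    proof
      fix \<omega>
      have "g (restrict (\<lambda>k. Xf k \<omega>) A) = J \<omega>"
        unfolding g_def J_eq by (rule argmax_cong) (simp add: A_def Xf_def V_def)
      then show "(Y1 \<circ> (\<lambda>\<omega>. restrict (\<lambda>k. Xf k \<omega>) A)) \<omega> = (if J \<omega> = n then V n \<omega> ^ i else 0)"
        using n by (simp add: Y1_def A_def Xf_def V_def)
    qed
    have e2: "Y2 \<circ> (\<lambda>\<omega>. restrict (\<lambda>k. Xf k \<omega>) B) = (\<lambda>\<omega>. W n \<omega> ^ j)"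
      by (auto simp: Y2_def B_def Xf_def W_def)
    have iv3: "P.indep_var borel (\<lambda>\<omega>. if J \<omega> = n then V n \<omega> ^ i else 0) borel (\<lambda>\<omega>. W n \<omega> ^ j)"
      using iv2 by (simp only: e1 e2)
    have i2: "integrable M (\<lambda>\<omega>. W n \<omega> ^ j)" by (rule P.exp_moments(1)[OF W_exp])
    show ?thesis
      using P.indep_var_lebesgue_integral[OF iv3 i1 i2] P.indep_var_integrable[OF iv3 i1 i2]
        P.exp_moments(2)[OF W_exp] by simp
  qed
  have sumXZ: "X \<omega> ^ i * Z \<omega> ^ j = (\<Sum>n<N. (if J \<omega> = n then V n \<omega> ^ i else 0) * W n \<omega> ^ j)" for \<omega> i j
  proof -
    have "(\<Sum>n<N. (if J \<omega> = n then V n \<omega> ^ i else 0) * W n \<omega> ^ j) = (\<Sum>n<N. if J \<omega> = n then V n \<omega> ^ i * W n \<omega> ^ j else 0)"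
      by (intro sum.cong) auto
    also have "\<dots> = V (J \<omega>) \<omega> ^ i * W (J \<omega>) \<omega> ^ j" using JN[of \<omega>] by (simp add: sum.delta)
    finally show ?thesis by (simp add: X_def Z_def)
  qed
  have sumX: "X \<omega> ^ i = (\<Sum>n<N. if J \<omega> = n then V n \<omega> ^ i else 0)" for \<omega> i
    using JN[of \<omega>] by (simp add: sum.delta X_def)
  have mom: "integrable M (\<lambda>\<omega>. X \<omega> ^ i * Z \<omega> ^ j) \<and> P.expectation (\<lambda>\<omega>. X \<omega> ^ i * Z \<omega> ^ j) = fact j * P.expectation (\<lambda>\<omega>. X \<omega> ^ i)" for i j
  proof -
    have eq: "(\<lambda>\<omega>. X \<omega> ^ i * Z \<omega> ^ j) = (\<lambda>\<omega>. \<Sum>n<N. (if J \<omega> = n then V n \<omega> ^ i else 0) * W n \<omega> ^ j)"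
      using sumXZ by auto
    have eqX: "(\<lambda>\<omega>. X \<omega> ^ i) = (\<lambda>\<omega>. \<Sum>n<N. if J \<omega> = n then V n \<omega> ^ i else 0)"
      using sumX by auto
    have "integrable M (\<lambda>\<omega>. X \<omega> ^ i * Z \<omega> ^ j)" unfolding eq using fac by auto
    moreover have "P.expectation (\<lambda>\<omega>. X \<omega> ^ i * Z \<omega> ^ j) = fact j * P.expectation (\<lambda>\<omega>. X \<omega> ^ i)"
    proof -
      have "P.expectation (\<lambda>\<omega>. X \<omega> ^ i * Z \<omega> ^ j) = (\<Sum>n<N. P.expectation (\<lambda>\<omega>. (if J \<omega> = n then V n \<omega> ^ i else 0) * W n \<omega> ^ j))"
        unfolding eq by (rule Bochner_Integration.integral_sum) (use fac in auto)
      also have "\<dots> = (\<Sum>n<N. P.expectation (\<lambda>\<omega>. if J \<omega> = n then V n \<omega> ^ i else 0) * fact j)"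
        using fac by (intro sum.cong) auto
      also have "\<dots> = fact j * (\<Sum>n<N. P.expectation (\<lambda>\<omega>. if J \<omega> = n then V n \<omega> ^ i else 0))"
        by (simp add: sum_distrib_left mult.commute)
      also have "(\<Sum>n<N. P.expectation (\<lambda>\<omega>. if J \<omega> = n then V n \<omega> ^ i else 0)) = P.expectation (\<lambda>\<omega>. X \<omega> ^ i)"
        unfolding eqX by (rule Bochner_Integration.integral_sum[symmetric]) (use i1 in auto)
      finally show ?thesis .
    qed
    ultimately show ?thesis ..
  qed
  have iX: "integrable M X" and EX: "P.expectation X = harm N"
    using hX by (auto intro: integrable.intros dest: has_bochner_integral_integral_eq)
  have iX2: "integrable M (\<lambda>\<omega>. (X \<omega>)\<^sup>2)" and EX2: "P.expectation (\<lambda>\<omega>. (X \<omega>)\<^sup>2) \<le> (harm N)\<^sup>2 + harm N"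
    using hX2 harm_sq_bound[of N] by (auto intro: integrable.intros dest: has_bochner_integral_integral_eq)
  have iZ: "integrable M Z" and EZ: "P.expectation Z = 1"
    using mom[of 0 1] by (simp_all add: P.prob_space)
  have iZ2: "integrable M (\<lambda>\<omega>. (Z \<omega>)\<^sup>2)" and EZ2: "P.expectation (\<lambda>\<omega>. (Z \<omega>)\<^sup>2) = 2"
    using mom[of 0 2] by (simp_all add: P.prob_space numeral_2_eq_2)
  have iXZ: "integrable M (\<lambda>\<omega>. X \<omega> * Z \<omega>)" and EXZ: "P.expectation (\<lambda>\<omega>. X \<omega> * Z \<omega>) = harm N"
    using mom[of 1 1] EX by simp_all
  have nnX: "0 \<le> X \<omega>" for \<omega> by (simp add: X_def Vnn)
  have nnZ: "0 \<le> Z \<omega>" for \<omega> by (simp add: Z_def Wnn)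
  have H1: "1 \<le> (harm N :: real)" using harm_mono[of 1 N, where 'a=real] N by (simp add: harm_expand)
  define a where "a = (cmod \<rho>)\<^sup>2"
  have a0: "0 \<le> a" by (simp add: a_def)
  have a1: "a \<le> 1" unfolding a_def using rho_le by (intro power_le_one) auto
  have Cb: "(Y \<omega> - a * X \<omega> - (1 - a) * Z \<omega>)\<^sup>2 \<le> 4 * X \<omega> * Z \<omega>" for \<omega>
  proof -
    have r0: "0 \<le> sqrt (1 - (cmod \<rho>)\<^sup>2)" using a1 by (simp add: a_def)
    have rr: "(sqrt (1 - (cmod \<rho>)\<^sup>2))\<^sup>2 = 1 - (cmod \<rho>)\<^sup>2" using a1 by (simp add: a_def)
    show ?thesis
      using cross_bound[OF rho_le r0 rr, of "x (J \<omega>) \<omega>" "z (J \<omega>) \<omega>"]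
      by (simp add: Y_def y_def X_def Z_def V_def W_def a_def)
  qed
  note eb = P.est_bounds[OF Xm Zm Ym iX iX2 iZ iZ2 iXZ EX EX2 EZ EZ2 EXZ nnX nnZ H1 a0 a1 Cb]
  have den: "(\<integral>\<omega>'. (cmod (x (argmax_idx x N \<omega>') \<omega>'))\<^sup>2 \<partial>M) = harm N"
  proof -
    have "(\<lambda>\<omega>'. (cmod (x (argmax_idx x N \<omega>') \<omega>'))\<^sup>2) = X"
      by (auto simp: fun_eq_iff X_def V_def J_def)
    then show ?thesis using EX by simp
  qed
  have mm: "mmie_est M x y N = (\<lambda>\<omega>. Y \<omega> / harm N)"
    by (auto simp: fun_eq_iff mmie_est_def den Y_def J_def)
  show "\<bar>(\<integral>\<omega>. mmie_est M x y N \<omega> \<partial>M) - (cmod \<rho>)\<^sup>2\<bar> \<le> (1 - (cmod \<rho>)\<^sup>2) / harm N + 2 / sqrt (harm N)"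
    using eb(1) by (simp add: mm a_def)
  show "var M (mmie_est M x y N) \<le> 18 / harm N"
    using eb(2) by (simp add: mm)
qed

theorem lemma1:
  fixes M :: "'a measure"
    and x z y :: "nat \<Rightarrow> 'a \<Rightarrow> complex"
    and \<rho> :: complex
  assumes "prob_space M"
    and indep: "prob_space.indep_vars M (\<lambda>_. borel)
                  (\<lambda>i. case i of Inl n \<Rightarrow> x n | Inr n \<Rightarrow> z n) UNIV"
    and x_CN: "\<And>n. distributed M lborel (x n) (\<lambda>w. ennreal (cn_density w))"
    and z_CN: "\<And>n. distributed M lborel (z n) (\<lambda>w. ennreal (cn_density w))"
    and rho_pos: "0 < cmod \<rho>" and rho_le: "cmod \<rho> \<le> 1"
    and y_def: "\<And>n \<omega>. y n \<omega> = \<rho> * x n \<omega> + complex_of_real (sqrt (1 - (cmod \<rho>)\<^sup>2)) * z n \<omega>"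
  shows "(\<lambda>N. \<integral>\<omega>. mmie_est M x y N \<omega> \<partial>M) \<longlonglongrightarrow> (cmod \<rho>)\<^sup>2
       \<and> (\<lambda>N. var M (mmie_est M x y N)) \<in> O[sequentially](\<lambda>N. 1 / harm N)
       \<and> (\<lambda>k. var M (mmie_est M x y (2 ^ k))) \<in> O[sequentially](\<lambda>k. 1 / real k)"
proof -
  define a where "a = (cmod \<rho>)\<^sup>2"
  define E where "E N = (\<integral>\<omega>. mmie_est M x y N \<omega> \<partial>M)" for N
  have b1: "\<bar>E N - a\<bar> \<le> (1 - a) / harm N + 2 / sqrt (harm N)" if "0 < N" for N
    unfolding E_def a_def by (rule main_N(1)[OF assms(1) indep x_CN z_CN rho_le y_def that])
  have b2: "var M (mmie_est M x y N) \<le> 18 / harm N" if "0 < N" for N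
    by (rule main_N(2)[OF assms(1) indep x_CN z_CN rho_le y_def that])
  have vnn: "0 \<le> var M f" for f :: "'a \<Rightarrow> real"
    unfolding var_def by (rule Bochner_Integration.integral_nonneg) simp
  have part1: "E \<longlonglongrightarrow> a"
  proof -
    have h1: "((\<lambda>N. inverse (harm N :: real)) \<longlongrightarrow> 0) sequentially"
      by (rule tendsto_inverse_0_at_top[OF harm_at_top])
    have h2: "((\<lambda>N. inverse (sqrt (harm N :: real))) \<longlongrightarrow> 0) sequentially"
      by (rule tendsto_inverse_0_at_top[OF filterlim_compose[OF sqrt_at_top harm_at_top]])
    have "((\<lambda>N. (1 - a) * inverse (harm N :: real) + 2 * inverse (sqrt (harm N))) \<longlongrightarrow> (1 - a) * 0 + 2 * 0) sequentially"
      by (intro tendsto_add tendsto_mult tendsto_const h1 h2)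
    then have g0: "((\<lambda>N. (1 - a) / harm N + 2 / sqrt (harm N :: real)) \<longlongrightarrow> 0) sequentially"
      by (simp add: divide_inverse)
    have "eventually (\<lambda>N. norm (E N - a) \<le> (1 - a) / harm N + 2 / sqrt (harm N)) sequentially"
      using eventually_gt_at_top[of "0::nat"] by eventually_elim (use b1 in simp)
    then have "((\<lambda>N. E N - a) \<longlongrightarrow> 0) sequentially"
      by (rule Lim_null_comparison[OF _ g0])
    then show ?thesis by (rule LIM_zero_cancel)
  qed
  have part2: "(\<lambda>N. var M (mmie_est M x y N)) \<in> O[sequentially](\<lambda>N. 1 / harm N)"
  proof (rule bigoI[where c=18])
    show "eventually (\<lambda>N. norm (var M (mmie_est M x y N)) \<le> 18 * norm (1 / harm N :: real)) sequentially"
      using eventually_gt_at_top[of "0::nat"]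
    proof eventually_elim
      case (elim N)
      have "0 < (harm N :: real)" using elim by simp
      then show ?case using b2[OF elim] vnn[of "mmie_est M x y N"] by simp
    qed
  qed
  have part3: "(\<lambda>k. var M (mmie_est M x y (2 ^ k))) \<in> O[sequentially](\<lambda>k. 1 / real k)"
  proof (rule bigoI[where c="18 / ln 2"])
    show "eventually (\<lambda>k. norm (var M (mmie_est M x y (2 ^ k))) \<le> 18 / ln 2 * norm (1 / real k)) sequentially"
      using eventually_gt_at_top[of "0::nat"]
    proof eventually_elim
      case (elim k)
      have l2: "0 < ln (2::real)" by simp
      have "real k * ln 2 = ln (2 ^ k :: real)" by (simp add: ln_realpow)
      also have "\<dots> \<le> ln (real (2 ^ k) + 1)" by (subst ln_le_cancel_iff) (auto simp: add_pos_pos)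
      also have "\<dots> \<le> harm (2 ^ k)" by (rule ln_le_harm)
      finally have hk: "real k * ln 2 \<le> harm (2 ^ k)" .
      have kp: "0 < real k * ln 2" using elim l2 by simp
      have "var M (mmie_est M x y (2 ^ k)) \<le> 18 / harm (2 ^ k)" by (rule b2) simp
      also have "\<dots> \<le> 18 / (real k * ln 2)" using hk kp by (intro divide_left_mono) auto
      also have "\<dots> = 18 / ln 2 * (1 / real k)" by simp
      finally show ?case using vnn[of "mmie_est M x y (2 ^ k)"] elim by simp
    qed
  qed
  show ?thesis using part1 part2 part3 unfolding E_def[abs_def] a_def by simp
qed

end
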